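(* Assume $b\ne0$. Then $\varphi(\lambda)\sim-\frac1{|b|}\ln\lambda$ as $\lambda\to0$, $-\ln g(x)\sim|b|x$ as $x\to\infty$, and for any function $\lambda_t\to0+$ as $t\to\infty$: $\ln v_t(\lambda_t)\sim-b\,(t+\varphi(\lambda_t))$ as $t\to\infty$ if $b>0$; and $\ln v_t(\rho_t\lambda_t)\sim\ln\lambda_t$ as $t\to\infty$ if $b<0$.
   Context: Let $\sigma\ge 0$, $b\in\mathbb R$, and $\pi$ a $\sigma$-finite measure on $(0,\infty)$ with $\int_0^\infty (z\wedge z^2)\pi(\mathrm{d}z)<\infty$; $\Psi(q)=bq+\frac12\sigma^2q^2+\int_0^\infty(e^{-qu}-1+qu)\pi(\mathrm{d}u)$. For $\lambda\ge 0$, $t\mapsto v_t(\lambda)$ solves $\frac{\partial}{\partial t}v_t(\lambda)=-\Psi(v_t(\lambda))$, $v_0(\lambda)=\lambda$; $v_{-t}$ denotes the inverse of the strictly increasing map $\lambda\mapsto v_t(\lambda)$. Let $\rho=\inf\{z>0:\Psi(z)\ge0\}$ ($\inf\emptyset=\infty$). Fix $\lambda_0\in(0,\infty)$ if $b\ge0$ and $\lambda_0\in(0,\rho)$ if $b<0$; set $\varphi(\lambda)=\int_\lambda^{\lambda_0}\frac{\mathrm{d}u}{|\Psi(u)|}$ for $0<\lambda<\lambda_0$, a strictly decreasing bijection $(0,\lambda_0)\to(0,\infty)$, and let $g$ be its inverse. Set $\rho_t=1$ if $b>0$ and $\rho_t=v_{-t}(\lambda_0)$ if $b<0$. *)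

theory Defs
  imports "HOL-Analysis.Analysis" "HOL-Library.Landau_Symbols"
begin

definition Psi :: "real \<Rightarrow> real \<Rightarrow> real measure \<Rightarrow> real \<Rightarrow> real" where
  "Psi b \<sigma> \<pi> q = b * q + (1/2) * \<sigma>^2 * q^2
      + (LINT u:{0<..}|\<pi>. exp (- q * u) - 1 + q * u)"

definition rho_Psi :: "real \<Rightarrow> real \<Rightarrow> real measure \<Rightarrow> ereal" where
  "rho_Psi b \<sigma> \<pi> = Inf (ereal ` {z. z > 0 \<and> Psi b \<sigma> \<pi> z \<ge> 0})"

definition phi :: "real \<Rightarrow> real \<Rightarrow> real measure \<Rightarrow> real \<Rightarrow> real \<Rightarrow> real" where
  "phi b \<sigma> \<pi> l0 l = integral {l..l0} (\<lambda>u. 1 / \<bar>Psi b \<sigma> \<pi> u\<bar>)"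

definition ginv :: "real \<Rightarrow> real \<Rightarrow> real measure \<Rightarrow> real \<Rightarrow> real \<Rightarrow> real" where
  "ginv b \<sigma> \<pi> l0 x = (THE l. 0 < l \<and> l < l0 \<and> phi b \<sigma> \<pi> l0 l = x)"

text \<open>v_{-t}(mu): inverse of the strictly increasing map lambda |-> v_t(lambda) on [0,inf).\<close>
definition vinv :: "(real \<Rightarrow> real \<Rightarrow> real) \<Rightarrow> real \<Rightarrow> real \<Rightarrow> real" where
  "vinv v t \<mu> = (THE l. 0 \<le> l \<and> v t l = \<mu>)"

definition rho_t :: "real \<Rightarrow> (real \<Rightarrow> real \<Rightarrow> real) \<Rightarrow> real \<Rightarrow> real \<Rightarrow> real" where
  "rho_t b v l0 t = (if b > 0 then 1 else vinv v t l0)"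

end

theory Submission
  imports Defs
begin

lemma k_bounds:
  fixes x :: real assumes x: "x \<ge> 0"
  shows "0 \<le> exp (-x) - 1 + x" "exp (-x) - 1 + x \<le> x" "exp (-x) - 1 + x \<le> x^2/2"
proof -
  show "0 \<le> exp (-x) - 1 + x" using exp_ge_add_one_self[of "-x"] by simp
  show "exp (-x) - 1 + x \<le> x" using x by simp
  let ?h = "\<lambda>x::real. 1 - x + x^2/2 - exp (-x)"
  have "?h 0 \<le> ?h x"
  proof (rule DERIV_nonneg_imp_nondecreasing[OF x])
    fix y :: real assume "0 \<le> y" "y \<le> x"
    show "\<exists>d. (?h has_real_derivative d) (at y) \<and> 0 \<le> d"
      apply (rule exI[of _ "-1 + y + exp (-y)"])
      using exp_ge_add_one_self[of "-y"]
      by (auto intro!: derivative_eq_intros)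
  qed
  then show "exp (-x) - 1 + x \<le> x^2/2" by simp
qed

locale setting =
  fixes \<sigma> b l0 :: real and \<pi> :: "real measure" and v :: "real \<Rightarrow> real \<Rightarrow> real"
  assumes sigma_nonneg: "\<sigma> \<ge> 0"
    and pi_sets: "sets \<pi> = sets borel"
    and pi_moment: "(\<integral>\<^sup>+ z\<in>{0<..}. ennreal (min z (z^2)) \<partial>\<pi>) < \<infinity>"
    and v_init: "\<And>l. l \<ge> 0 \<Longrightarrow> v 0 l = l"
    and v_ode: "\<And>l t. l \<ge> 0 \<Longrightarrow> t \<ge> 0 \<Longrightarrow>
                 ((\<lambda>s. v s l) has_real_derivative (- Psi b \<sigma> \<pi> (v t l))) (at t within {0..})"
    and b_nz: "b \<noteq> 0"
    and lambda0_pos: "0 < l0"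
    and lambda0_rho: "b < 0 \<Longrightarrow> ereal l0 < rho_Psi b \<sigma> \<pi>"
begin

lemmas [measurable_cong] = pi_sets

definition w :: "real \<Rightarrow> real" where "w u = indicator {0<..} u * min u (u^2)"
definition kk :: "real \<Rightarrow> real \<Rightarrow> real" where "kk q u = exp (- q * u) - 1 + q * u"
definition I :: "real \<Rightarrow> real" where "I q = integral\<^sup>L \<pi> (\<lambda>u. indicator {0<..} u * kk q u)"

lemma P_eq: "Psi b \<sigma> \<pi> q = b * q + (1/2) * \<sigma>^2 * q^2 + I q"
  unfolding Psi_def I_def kk_def set_lebesgue_integral_def by simp

lemma w_int: "integrable \<pi> w"
proof (rule integrableI_nonneg)
  show "w \<in> borel_measurable \<pi>" unfolding w_def by measurable
  show "AE x in \<pi>. 0 \<le> w x" by (rule AE_I2) (auto simp: w_def split: split_indicator)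
  have "(\<integral>\<^sup>+ x. ennreal (w x) \<partial>\<pi>) = (\<integral>\<^sup>+ z\<in>{0<..}. ennreal (min z (z^2)) \<partial>\<pi>)"
    by (intro nn_integral_cong) (auto simp: w_def split: split_indicator)
  then show "(\<integral>\<^sup>+ x. ennreal (w x) \<partial>\<pi>) < \<infinity>" using pi_moment by simp
qed

lemma dct_within:
  fixes G :: "real \<Rightarrow> real \<Rightarrow> real" and G0 :: "real \<Rightarrow> real" and h :: "real \<Rightarrow> real"
  assumes hint: "integrable \<pi> h"
    and meas: "\<And>q. q \<in> S \<Longrightarrow> G q \<in> borel_measurable \<pi>" "G0 \<in> borel_measurable \<pi>"
    and bnd: "\<And>q u. q \<in> S \<Longrightarrow> \<bar>G q u\<bar> \<le> h u"
    and lim: "\<And>u. ((\<lambda>q. G q u) \<longlongrightarrow> G0 u) (at x within S)"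
  shows "((\<lambda>q. integral\<^sup>L \<pi> (G q)) \<longlongrightarrow> integral\<^sup>L \<pi> G0) (at x within S)"
  unfolding tendsto_at_iff_sequentially
proof (intro allI impI)
  fix X :: "nat \<Rightarrow> real" assume X: "\<forall>i. X i \<in> S - {x}" "X \<longlonglongrightarrow> x"
  show "((\<lambda>q. integral\<^sup>L \<pi> (G q)) \<circ> X) \<longlonglongrightarrow> integral\<^sup>L \<pi> G0"
    unfolding o_def
  proof (rule integral_dominated_convergence[where w=h])
    show "AE u in \<pi>. (\<lambda>i. G (X i) u) \<longlonglongrightarrow> G0 u"
    proof (rule AE_I2)
      fix u
      show "(\<lambda>i. G (X i) u) \<longlonglongrightarrow> G0 u"
        using lim[of u] X unfolding tendsto_at_iff_sequentially o_def by blast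
    qed
  qed (use X meas bnd hint in auto)
qed


lemma kk_nonneg: "q \<ge> 0 \<Longrightarrow> u \<ge> 0 \<Longrightarrow> 0 \<le> kk q u"
  using k_bounds(1)[of "q*u"] by (simp add: kk_def)

lemma kk_le1: "q \<ge> 0 \<Longrightarrow> u \<ge> 0 \<Longrightarrow> kk q u \<le> q * u"
  using k_bounds(2)[of "q*u"] by (simp add: kk_def)

lemma kk_le2: "q \<ge> 0 \<Longrightarrow> u \<ge> 0 \<Longrightarrow> kk q u \<le> (q * u)^2 / 2"
  using k_bounds(3)[of "q*u"] by (simp add: kk_def)

lemma I_nonneg: "q \<ge> 0 \<Longrightarrow> I q \<ge> 0"
  unfolding I_def
  by (rule integral_nonneg_AE, rule AE_I2) (auto split: split_indicator intro!: kk_nonneg)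

lemma I_div_lim: "((\<lambda>q. I q / q) \<longlongrightarrow> 0) (at_right 0)"
proof -
  let ?S = "{0<..1::real}"
  let ?G = "\<lambda>q u. indicator {0<..} u * kk q u / q"
  have "((\<lambda>q. integral\<^sup>L \<pi> (?G q)) \<longlongrightarrow> integral\<^sup>L \<pi> (\<lambda>u. 0)) (at 0 within ?S)"
  proof (rule dct_within[OF w_int])
    show "?G q \<in> borel_measurable \<pi>" for q unfolding kk_def by measurable
    show "(\<lambda>u. 0::real) \<in> borel_measurable \<pi>" by simp
    show "\<bar>?G q u\<bar> \<le> w u" if q: "q \<in> ?S" for q u
    proof (cases "u > 0")
      case True
      have a: "kk q u / q \<le> u" using kk_le1[of q u] q True by (simp add: divide_le_eq mult.commute)
      have "kk q u / q \<le> ((q * u)^2 / 2) / q" using kk_le2[of q u] q True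
        by (intro divide_right_mono) auto
      also have "\<dots> = (q/2) * u^2" using q by (simp add: power2_eq_square)
      also have "\<dots> \<le> 1 * u^2" using q by (intro mult_right_mono) auto
      finally have b: "kk q u / q \<le> u^2" by simp
      have c: "0 \<le> kk q u / q" using kk_nonneg[of q u] q True by simp
      have d: "\<bar>?G q u\<bar> = kk q u / q" using kk_nonneg[of q u] q True by simp
      show ?thesis unfolding d using a b True by (simp add: w_def)
    qed (simp add: w_def)
    show "((\<lambda>q. ?G q u) \<longlongrightarrow> 0) (at 0 within ?S)" for u
    proof -
      have d: "((\<lambda>q. exp (- q * u)) has_field_derivative - u) (at 0 within ?S)"
        by (auto intro!: derivative_eq_intros)
      have "((\<lambda>q. (exp (- q * u) - exp (- 0 * u)) / (q - 0)) \<longlongrightarrow> - u) (at 0 within ?S)"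
        using d unfolding has_field_derivative_iff by simp
      then have "((\<lambda>q. indicator {0<..} u * ((exp (- q * u) - exp (- 0 * u)) / (q - 0) + u)) \<longlongrightarrow>
           indicator {0<..} u * (- u + u)) (at 0 within ?S)"
        by (intro tendsto_intros)
      then have "((\<lambda>q. indicator {0<..} u * ((exp (- q * u) - exp (- 0 * u)) / (q - 0) + u)) \<longlongrightarrow>
           0) (at 0 within ?S)" by simp
      moreover have "eventually (\<lambda>q. indicator {0<..} u * ((exp (- q * u) - exp (- 0 * u)) / (q - 0) + u)
            = ?G q u) (at 0 within ?S)"
        unfolding eventually_at_filter
        by (rule always_eventually) (auto simp: kk_def field_simps)
      ultimately show ?thesis by (rule Lim_transform_eventually)
    qed
  qed
  moreover have "at (0::real) within ?S = at_right 0"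
    by (rule at_within_nhd[where S="{-1<..<1}"]) auto
  moreover have "(\<lambda>q. integral\<^sup>L \<pi> (?G q)) = (\<lambda>q. I q / q)"
    unfolding I_def by (rule ext) (rule integral_divide_zero)
  ultimately show ?thesis by simp
qed

lemma P_div_lim: "((\<lambda>q. Psi b \<sigma> \<pi> q / q) \<longlongrightarrow> b) (at_right 0)"
proof -
  have l1: "((\<lambda>q. (1/2) * \<sigma>^2 * q) \<longlongrightarrow> 0) (at_right (0::real))"
    using tendsto_mult[OF tendsto_const[of "(1/2) * \<sigma>^2"] tendsto_ident_at[of "0::real" "{0<..}"]] by simp
  have "((\<lambda>q. b + (1/2) * \<sigma>^2 * q + I q / q) \<longlongrightarrow> b + 0 + 0) (at_right 0)"
    by (rule tendsto_add[OF tendsto_add[OF tendsto_const l1] I_div_lim])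
  then have "((\<lambda>q. b + (1/2) * \<sigma>^2 * q + I q / q) \<longlongrightarrow> b) (at_right 0)" by simp
  moreover have "eventually (\<lambda>q. b + (1/2) * \<sigma>^2 * q + I q / q = Psi b \<sigma> \<pi> q / q) (at_right (0::real))"
    unfolding eventually_at_filter
    by (rule always_eventually) (auto simp: P_eq field_simps power2_eq_square)
  ultimately show ?thesis by (rule Lim_transform_eventually)
qed

lemma I_cont: "continuous_on {0<..} I"
proof -
  have "isCont I q0" if q0: "q0 > 0" for q0
  proof -
    define Q where "Q = 2 * q0"
    define C where "C = max Q (Q^2)"
    let ?S = "{0<..<Q}"
    let ?G = "\<lambda>q u. indicator {0<..} u * kk q u"
    have "((\<lambda>q. integral\<^sup>L \<pi> (?G q)) \<longlongrightarrow> integral\<^sup>L \<pi> (?G q0)) (at q0 within ?S)"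
    proof (rule dct_within[where h="\<lambda>u. C * w u"])
      show "integrable \<pi> (\<lambda>u. C * w u)" using w_int by simp
      show "?G q \<in> borel_measurable \<pi>" for q unfolding kk_def by measurable
      show "?G q0 \<in> borel_measurable \<pi>" unfolding kk_def by measurable
      show "\<bar>?G q u\<bar> \<le> C * w u" if q: "q \<in> ?S" for q u
      proof (cases "u > 0")
        case True
        have qc: "q * u \<le> C * u" using q True unfolding C_def
          by (intro mult_right_mono) auto
        have a: "kk q u \<le> C * u" using order_trans[OF kk_le1[of q u] qc] q True by simp
        have "kk q u \<le> (q * u)^2 / 2" using kk_le2[of q u] q True by simp
        also have "\<dots> \<le> (q * u)^2" by simp
        also have "\<dots> = q^2 * u^2" by (simp add: power_mult_distrib)
        also have "\<dots> \<le> Q^2 * u^2" using q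
          by (intro mult_right_mono power_mono) auto
        also have "\<dots> \<le> C * u^2" by (simp add: C_def mult_right_mono)
        finally have b: "kk q u \<le> C * u^2" .
        have c: "0 \<le> kk q u" using kk_nonneg[of q u] q True by simp
        have d: "\<bar>?G q u\<bar> = kk q u" using kk_nonneg[of q u] q True by simp
        show ?thesis unfolding d using a b True by (simp add: w_def min_def)
      qed (simp add: w_def)
      show "((\<lambda>q. ?G q u) \<longlongrightarrow> ?G q0 u) (at q0 within ?S)" for u
        unfolding kk_def by (intro tendsto_intros)
    qed
    moreover have "at q0 within ?S = at q0"
      by (rule at_within_open) (use q0 in \<open>auto simp: Q_def\<close>)
    ultimately show ?thesis unfolding isCont_def I_def by simp
  qed
  then show ?thesis by (simp add: continuous_on_eq_continuous_at)
qed

lemma P_cont: "continuous_on {0<..} (Psi b \<sigma> \<pi>)"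
proof -
  have "continuous_on {0<..} (\<lambda>q. b * q + (1/2) * \<sigma>^2 * q^2 + I q)"
    by (intro continuous_intros I_cont)
  then show ?thesis by (simp add: P_eq[abs_def])
qed

lemma P_pos: "b > 0 \<Longrightarrow> q > 0 \<Longrightarrow> Psi b \<sigma> \<pi> q > 0"
  using I_nonneg[of q] by (simp add: P_eq add_pos_nonneg)

lemma P_neg: "b < 0 \<Longrightarrow> q > 0 \<Longrightarrow> q \<le> l0 \<Longrightarrow> Psi b \<sigma> \<pi> q < 0"
proof (rule ccontr)
  assume "b < 0" "q > 0" "q \<le> l0" "\<not> Psi b \<sigma> \<pi> q < 0"
  then have "ereal q \<in> ereal ` {z. z > 0 \<and> Psi b \<sigma> \<pi> z \<ge> 0}" by auto
  then have "rho_Psi b \<sigma> \<pi> \<le> ereal q" unfolding rho_Psi_def by (rule Inf_lower)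
  moreover have "ereal q \<le> ereal l0" using \<open>q \<le> l0\<close> by simp
  ultimately have "rho_Psi b \<sigma> \<pi> \<le> ereal l0" by (rule order_trans)
  with lambda0_rho[OF \<open>b<0\<close>] show False by simp
qed


abbreviation "P \<equiv> Psi b \<sigma> \<pi>"
abbreviation "ph \<equiv> phi b \<sigma> \<pi> l0"
abbreviation "gg \<equiv> ginv b \<sigma> \<pi> l0"
definition f :: "real \<Rightarrow> real" where "f u = 1 / \<bar>P u\<bar>"

lemma P_nz: "0 < u \<Longrightarrow> u \<le> l0 \<Longrightarrow> P u \<noteq> 0"
  using P_pos[of u] P_neg[of u] b_nz by (cases "b > 0") auto

lemma P_sgn: "0 < u \<Longrightarrow> u \<le> l0 \<Longrightarrow> P u / \<bar>P u\<bar> = sgn b"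
  using P_pos[of u] P_neg[of u] b_nz by (cases "b > 0") auto

lemma f_pos: "0 < u \<Longrightarrow> u \<le> l0 \<Longrightarrow> f u > 0"
  using P_nz[of u] by (simp add: f_def)

lemma f_cont: "continuous_on {0<..l0} f"
proof -
  have "continuous_on {0<..l0} P" by (rule continuous_on_subset[OF P_cont]) auto
  then have "continuous_on {0<..l0} (\<lambda>u. 1 / \<bar>P u\<bar>)"
    by (intro continuous_intros) (use P_nz in auto)
  then show ?thesis by (simp add: f_def[abs_def])
qed

lemma f_cont_c: "0 < c \<Longrightarrow> continuous_on {c..l0} f"
  by (rule continuous_on_subset[OF f_cont]) auto

lemma f_int: "0 < c \<Longrightarrow> f integrable_on {c..l0}"
  by (rule integrable_continuous_real[OF f_cont_c])

lemma f_int2: "0 < x \<Longrightarrow> x \<le> y \<Longrightarrow> y \<le> l0 \<Longrightarrow> f integrable_on {x..y}"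
  by (rule integrable_continuous_real, rule continuous_on_subset[OF f_cont]) auto

lemma ph_eq: "ph y = integral {y..l0} f"
  by (simp add: phi_def f_def[abs_def])

lemma ph_diff: "0 < x \<Longrightarrow> x \<le> y \<Longrightarrow> y \<le> l0 \<Longrightarrow> ph x - ph y = integral {x..y} f"
  using Henstock_Kurzweil_Integration.integral_combine[where a=x and c=y and b=l0 and f=f, OF _ _ f_int[of x]] by (simp add: ph_eq)

lemma ph_split: "0 < c \<Longrightarrow> c \<le> y \<Longrightarrow> y \<le> l0 \<Longrightarrow> ph y = integral {c..l0} f - integral {c..y} f"
  using Henstock_Kurzweil_Integration.integral_combine[where a=c and c=y and b=l0 and f=f, OF _ _ f_int[of c]] by (simp add: ph_eq)

lemma ph_cont: "0 < c \<Longrightarrow> continuous_on {c..l0} ph"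
proof -
  assume c: "0 < c"
  have "continuous_on {c..l0} (\<lambda>y. integral {c..l0} f - integral {c..y} f)"
    by (intro continuous_intros indefinite_integral_continuous_1 f_int c)
  then show ?thesis by (rule continuous_on_eq) (use ph_split c in auto)
qed

lemma ph_deriv: "0 < x \<Longrightarrow> x < l0 \<Longrightarrow> (ph has_real_derivative - f x) (at x)"
proof -
  assume x: "0 < x" "x < l0"
  define c where "c = x / 2"
  have c: "0 < c" "c < x" using x by (auto simp: c_def)
  have "((\<lambda>y. integral {c..y} f) has_real_derivative f x) (at x within {c..l0})"
    by (rule integral_has_real_derivative[OF f_cont_c]) (use c x in auto)
  moreover have "at x within {c..l0} = at x" by (rule at_within_Icc_at) (use c x in auto)
  ultimately have "((\<lambda>y. integral {c..y} f) has_real_derivative f x) (at x)" by simp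
  then have "((\<lambda>y. integral {c..l0} f - integral {c..y} f) has_real_derivative 0 - f x) (at x)"
    by (intro derivative_intros)
  then have "((\<lambda>y. integral {c..l0} f - integral {c..y} f) has_real_derivative - f x) (at x)"
    by simp
  then show ?thesis
    by (rule has_field_derivative_transform_within_open[where S="{c<..<l0}"]) (use c x ph_split in auto)
qed

lemma ph_l0: "ph l0 = 0"
  by (simp add: ph_eq)

lemma ph_nonneg: "0 < x \<Longrightarrow> x \<le> l0 \<Longrightarrow> ph x \<ge> 0"
  unfolding ph_eq by (rule integral_nonneg[OF f_int]) (auto intro!: less_imp_le[OF f_pos])

lemma ph_strict: "0 < x \<Longrightarrow> x < y \<Longrightarrow> y \<le> l0 \<Longrightarrow> ph y < ph x"
proof -
  have A: "ph y < ph x" if "0 < x" "x < y" "y < l0" for x y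
    by (rule DERIV_neg_imp_decreasing[OF \<open>x < y\<close>])
       (use that ph_deriv f_pos in \<open>fastforce\<close>)
  assume a: "0 < x" "x < y" "y \<le> l0"
  show "ph y < ph x"
  proof (cases "y < l0")
    case True then show ?thesis using A a by auto
  next
    case False
    then have "y = l0" using a by auto
    moreover have "ph ((x + l0)/2) < ph x" using A[of x "(x+l0)/2"] a by auto
    moreover have "ph ((x + l0)/2) \<ge> 0" using ph_nonneg[of "(x+l0)/2"] a by auto
    ultimately show ?thesis using ph_l0 by auto
  qed
qed

lemma ph_pos: "0 < x \<Longrightarrow> x < l0 \<Longrightarrow> ph x > 0"
  using ph_strict[of x l0] ph_l0 by auto

lemma uf_lim: "((\<lambda>u. u * f u) \<longlongrightarrow> 1 / \<bar>b\<bar>) (at_right 0)"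
proof -
  have "((\<lambda>q. 1 / \<bar>P q / q\<bar>) \<longlongrightarrow> 1 / \<bar>b\<bar>) (at_right 0)"
    by (intro tendsto_divide tendsto_const tendsto_rabs P_div_lim) (use b_nz in auto)
  moreover have "eventually (\<lambda>q. 1 / \<bar>P q / q\<bar> = q * f q) (at_right (0::real))"
    unfolding eventually_at_filter
    by (rule always_eventually) (auto simp: f_def)
  ultimately show ?thesis by (rule Lim_transform_eventually)
qed

lemma inv_has_integral: "0 < (x::real) \<Longrightarrow> x \<le> y \<Longrightarrow> ((\<lambda>u. 1 / u) has_integral (ln y - ln x)) {x..y}"
proof -
  assume xy: "0 < x" "x \<le> y"
  have "((\<lambda>u. 1 / u) has_integral (ln y - ln x)) {x..y}"
  proof (rule fundamental_theorem_of_calculus[where f="ln :: real \<Rightarrow> real" and f'="\<lambda>u. 1 / u"])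
    fix u assume u: "u \<in> {x..y}"
    then have "(ln has_real_derivative 1 / u) (at u within {x..y})"
      using xy by (auto intro!: derivative_eq_intros)
    then show "(ln has_vector_derivative 1 / u) (at u within {x..y})"
      by (simp add: has_real_derivative_iff_has_vector_derivative)
  qed (use xy in auto)
  then show ?thesis by simp
qed

lemma K: "\<epsilon> > 0 \<Longrightarrow> \<exists>\<delta>>0. \<delta> \<le> l0 \<and> (\<forall>x y. 0 < x \<longrightarrow> x \<le> y \<longrightarrow> y \<le> \<delta> \<longrightarrow>
           \<bar>ph x - ph y - (ln y - ln x) / \<bar>b\<bar>\<bar> \<le> \<epsilon> * (ln y - ln x))"
proof -
  assume e: "\<epsilon> > 0"
  have "eventually (\<lambda>u. dist (u * f u) (1 / \<bar>b\<bar>) < \<epsilon>) (at_right 0)"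
    using uf_lim e by (rule tendstoD)
  then obtain d where d: "d > 0" "\<And>u. 0 < u \<Longrightarrow> u < d \<Longrightarrow> dist (u * f u) (1 / \<bar>b\<bar>) < \<epsilon>"
    unfolding eventually_at_right_field by auto
  define \<delta> where "\<delta> = min (d/2) l0"
  have \<delta>: "\<delta> > 0" "\<delta> \<le> l0" "\<delta> < d" using d lambda0_pos by (auto simp: \<delta>_def)
  show ?thesis
  proof (intro exI[of _ \<delta>] conjI allI impI \<delta>)
    fix x y :: real assume xy: "0 < x" "x \<le> y" "y \<le> \<delta>"
    let ?L = "ln y - ln x"
    have fb: "(1 / \<bar>b\<bar> - \<epsilon>) * (1 / u) \<le> f u \<and> f u \<le> (1 / \<bar>b\<bar> + \<epsilon>) * (1 / u)" if u: "u \<in> {x..y}" for u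
    proof -
      have u0: "u > 0" using u xy by auto
      have "\<bar>u * f u - 1 / \<bar>b\<bar>\<bar> < \<epsilon>" using d(2)[of u] u xy \<delta> by (auto simp: dist_real_def)
      then have "1 / \<bar>b\<bar> - \<epsilon> \<le> u * f u" "u * f u \<le> 1 / \<bar>b\<bar> + \<epsilon>" by auto
      then show ?thesis using u0 by (auto simp: field_simps)
    qed
    have fi: "(f has_integral integral {x..y} f) {x..y}"
      by (rule integrable_integral[OF f_int2]) (use xy \<delta> in auto)
    have lo: "(1 / \<bar>b\<bar> - \<epsilon>) * ?L \<le> integral {x..y} f"
      by (rule has_integral_le[OF has_integral_mult_right[OF inv_has_integral] fi]) (use xy fb in auto)
    have hi: "integral {x..y} f \<le> (1 / \<bar>b\<bar> + \<epsilon>) * ?L"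
      by (rule has_integral_le[OF fi has_integral_mult_right[OF inv_has_integral]]) (use xy fb in auto)
    have "ph x - ph y = integral {x..y} f" by (rule ph_diff) (use xy \<delta> in auto)
    moreover have "?L / \<bar>b\<bar> - \<epsilon> * ?L \<le> integral {x..y} f" using lo by (simp add: left_diff_distrib)
    moreover have "integral {x..y} f \<le> ?L / \<bar>b\<bar> + \<epsilon> * ?L" using hi by (simp add: distrib_right)
    ultimately show "\<bar>ph x - ph y - ?L / \<bar>b\<bar>\<bar> \<le> \<epsilon> * ?L" by (simp add: abs_le_iff)
  qed
qed


lemma claim1: "ph \<sim>[at_right 0] (\<lambda>l. - (1 / \<bar>b\<bar>) * ln l)"
proof -
  have "(\<lambda>l. ph l - (- (1 / \<bar>b\<bar>) * ln l)) \<in> o[at_right 0](\<lambda>l. - (1 / \<bar>b\<bar>) * ln l)"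
  proof (rule landau_o.smallI)
    fix c :: real assume c: "c > 0"
    define \<epsilon> where "\<epsilon> = c / (2 * \<bar>b\<bar>)"
    have e: "\<epsilon> > 0" using c b_nz by (simp add: \<epsilon>_def)
    obtain \<delta> where \<delta>: "\<delta> > 0" "\<delta> \<le> l0" and Kd: "\<And>x y. 0 < x \<Longrightarrow> x \<le> y \<Longrightarrow> y \<le> \<delta> \<Longrightarrow>
        \<bar>ph x - ph y - (ln y - ln x) / \<bar>b\<bar>\<bar> \<le> \<epsilon> * (ln y - ln x)"
      using K[OF e] by blast
    define C0 where "C0 = \<bar>ph \<delta> + ln \<delta> / \<bar>b\<bar>\<bar>"
    define M where "M = \<bar>ln \<delta>\<bar> + C0 / \<epsilon>"
    have M0: "M \<ge> 0" using e by (simp add: M_def C0_def)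
    have ev1: "eventually (\<lambda>l. ln l \<le> - M) (at_right (0::real))"
      using ln_at_0 unfolding filterlim_at_bot by blast
    have ev2: "eventually (\<lambda>l. 0 < l \<and> l < \<delta>) (at_right (0::real))"
      unfolding eventually_at_right_field using \<delta> by blast
    show "eventually (\<lambda>l. norm (ph l - (- (1 / \<bar>b\<bar>) * ln l)) \<le> c * norm (- (1 / \<bar>b\<bar>) * ln l)) (at_right 0)"
      using ev1 ev2
    proof eventually_elim
      case (elim l)
      have k: "\<bar>ph l - ph \<delta> - (ln \<delta> - ln l) / \<bar>b\<bar>\<bar> \<le> \<epsilon> * (ln \<delta> - ln l)"
        using Kd[of l \<delta>] elim by auto
      have "ph l - (- (1 / \<bar>b\<bar>) * ln l) = (ph l - ph \<delta> - (ln \<delta> - ln l) / \<bar>b\<bar>) + (ph \<delta> + ln \<delta> / \<bar>b\<bar>)"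
        by (simp add: diff_divide_distrib)
      then have "norm (ph l - (- (1 / \<bar>b\<bar>) * ln l)) \<le> \<bar>ph l - ph \<delta> - (ln \<delta> - ln l) / \<bar>b\<bar>\<bar> + C0"
        unfolding C0_def real_norm_def by (metis abs_triangle_ineq)
      also have "\<dots> \<le> \<epsilon> * (ln \<delta> - ln l) + C0" using k by simp
      also have "\<dots> = \<epsilon> * ln \<delta> + \<epsilon> * (C0 / \<epsilon>) + \<epsilon> * (- ln l)" using e by (simp add: algebra_simps)
      also have "\<dots> \<le> \<epsilon> * \<bar>ln \<delta>\<bar> + \<epsilon> * (C0 / \<epsilon>) + \<epsilon> * (- ln l)"
        using e by (simp add: mult_left_mono)
      also have "\<dots> = \<epsilon> * M + \<epsilon> * (- ln l)" by (simp add: M_def algebra_simps)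
      also have "\<dots> \<le> \<epsilon> * (- ln l) + \<epsilon> * (- ln l)"
      proof -
        have "M \<le> - ln l" using elim by simp
        then have "\<epsilon> * M \<le> \<epsilon> * (- ln l)" using e by (intro mult_left_mono) auto
        then show ?thesis by linarith
      qed
      also have "\<dots> = c * norm (- (1 / \<bar>b\<bar>) * ln l)"
      proof -
        have "ln l \<le> 0" using elim M0 by linarith
        then show ?thesis using b_nz by (simp add: \<epsilon>_def abs_mult abs_of_nonpos)
      qed
      finally show ?case .
    qed
  qed
  then show ?thesis by (simp add: asymp_equiv_altdef)
qed

lemma ph_large: "\<exists>l. 0 < l \<and> l < l0 \<and> ph l > X"
proof -
  define \<epsilon> where "\<epsilon> = 1 / (2 * \<bar>b\<bar>)"
  have e: "\<epsilon> > 0" using b_nz by (simp add: \<epsilon>_def)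
  obtain \<delta> where \<delta>: "\<delta> > 0" "\<delta> \<le> l0" and Kd: "\<And>x y. 0 < x \<Longrightarrow> x \<le> y \<Longrightarrow> y \<le> \<delta> \<Longrightarrow>
      \<bar>ph x - ph y - (ln y - ln x) / \<bar>b\<bar>\<bar> \<le> \<epsilon> * (ln y - ln x)"
    using K[OF e] by blast
  define Z where "Z = 2 * \<bar>b\<bar> * (\<bar>X\<bar> + 1)"
  define l where "l = \<delta> * exp (- Z)"
  have Z: "Z > 0" using b_nz by (simp add: Z_def)
  have l: "0 < l" "l < \<delta>" using \<delta> Z by (auto simp: l_def)
  have "ln l = ln \<delta> + ln (exp (- Z))" unfolding l_def by (rule ln_mult_pos) (use \<delta> in auto)
  then have lnl: "ln l = ln \<delta> - Z" by simp
  have "\<bar>ph l - ph \<delta> - (ln \<delta> - ln l) / \<bar>b\<bar>\<bar> \<le> \<epsilon> * (ln \<delta> - ln l)"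
    by (rule Kd) (use l in auto)
  then have "\<bar>ph l - ph \<delta> - Z / \<bar>b\<bar>\<bar> \<le> \<epsilon> * Z" unfolding lnl by simp
  then have "ph l \<ge> ph \<delta> + Z / \<bar>b\<bar> - \<epsilon> * Z" by linarith
  moreover have "Z / \<bar>b\<bar> = 2 * (\<bar>X\<bar> + 1)" using b_nz by (simp add: Z_def)
  moreover have "\<epsilon> * Z = \<bar>X\<bar> + 1" using b_nz by (simp add: Z_def \<epsilon>_def)
  moreover have "ph \<delta> \<ge> 0" using ph_nonneg \<delta> by auto
  moreover have "X \<le> \<bar>X\<bar>" by simp
  ultimately have "ph l > X" by (smt (verit))
  then show ?thesis using l \<delta> by (intro exI[of _ l]) auto
qed

lemma gg_props: "x > 0 \<Longrightarrow> 0 < gg x \<and> gg x < l0 \<and> ph (gg x) = x"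
proof -
  assume x: "x > 0"
  obtain l1 where l1: "0 < l1" "l1 < l0" "ph l1 > x" using ph_large by blast
  have c: "continuous_on {l1..l0} ph" using ph_cont[OF l1(1)] .
  have "ph l0 \<le> x" using ph_l0 x by simp
  from IVT2'[of ph l0 x l1, OF this less_imp_le[OF l1(3)] less_imp_le[OF l1(2)] c]
  obtain l where l: "l1 \<le> l" "l \<le> l0" "ph l = x" by blast
  have "l \<noteq> l0" using l(3) x ph_l0 by auto
  then have ex: "0 < l \<and> l < l0 \<and> ph l = x" using l l1 by simp
  have uniq: "m = l" if m: "0 < m \<and> m < l0 \<and> ph m = x" for m
  proof (rule ccontr)
    assume "m \<noteq> l"
    then consider "m < l" | "l < m" by linarith
    then show False
    proof cases
      case 1 then have "ph l < ph m" using ph_strict[of m l] m ex by simp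
      then show False using m ex by simp
    next
      case 2 then have "ph m < ph l" using ph_strict[of l m] m ex by simp
      then show False using m ex by simp
    qed
  qed
  have "gg x = l" unfolding ginv_def by (rule the_equality) (use ex uniq in blast)+
  then show ?thesis using ex by simp
qed

lemma gg_ph: "0 < l \<Longrightarrow> l < l0 \<Longrightarrow> gg (ph l) = l"
proof -
  assume l: "0 < l" "l < l0"
  have p: "ph l > 0" using ph_pos l by auto
  from gg_props[OF p] have "0 < gg (ph l)" "gg (ph l) < l0" "ph (gg (ph l)) = ph l" by auto
  then show ?thesis using ph_strict[of l "gg (ph l)"] ph_strict[of "gg (ph l)" l] l
    by (cases l "gg (ph l)" rule: linorder_cases) auto
qed

lemma gg_lim0: "filterlim gg (at_right 0) at_top"
proof (rule tendsto_imp_filterlim_at_right)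
  show "eventually (\<lambda>x. gg x > 0) at_top"
    using eventually_gt_at_top[of 0] by eventually_elim (use gg_props in auto)
  show "(gg \<longlongrightarrow> 0) at_top"
  proof (rule tendstoI)
    fix e :: real assume e: "e > 0"
    define y where "y = min e l0 / 2"
    have y: "0 < y" "y < l0" "y < e" using e lambda0_pos by (auto simp: y_def)
    have "eventually (\<lambda>x. x > max 0 (ph y)) at_top" by (rule eventually_gt_at_top)
    then show "eventually (\<lambda>x. dist (gg x) 0 < e) at_top"
    proof eventually_elim
      case (elim x)
      then have x: "x > 0" "x > ph y" by auto
      have g: "0 < gg x" "gg x < l0" "ph (gg x) = x" using gg_props[OF x(1)] by auto
      have "gg x < y"
      proof (rule ccontr)
        assume "\<not> gg x < y"
        then have "ph (gg x) \<le> ph y" using ph_strict[of y "gg x"] g y by (cases "gg x = y") auto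
        then show False using g x by simp
      qed
      then show ?case using g y by (simp add: dist_real_def)
    qed
  qed
qed

lemma gg_lim_l0: "(gg \<longlongrightarrow> l0) (at_right 0)"
proof (rule tendstoI)
  fix e :: real assume e: "e > 0"
  define y where "y = max (l0 - e / 2) (l0 / 2)"
  have y: "0 < y" "y < l0" "l0 - y < e" using e lambda0_pos by (auto simp: y_def)
  have "eventually (\<lambda>x. 0 < x \<and> x < ph y) (at_right (0::real))"
    unfolding eventually_at_right_field using ph_pos[of y] y by blast
  then show "eventually (\<lambda>x. dist (gg x) l0 < e) (at_right 0)"
  proof eventually_elim
    case (elim x)
    have g: "0 < gg x" "gg x < l0" "ph (gg x) = x" using gg_props elim by auto
    have "gg x > y"
    proof (rule ccontr)
      assume "\<not> gg x > y"
      then have "ph (gg x) \<ge> ph y" using ph_strict[of "gg x" y] g y by (cases "gg x = y") auto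
      then show False using g elim by simp
    qed
    then show ?case using g y by (simp add: dist_real_def)
  qed
qed

lemma claim2: "(\<lambda>x. - ln (gg x)) \<sim>[at_top] (\<lambda>x. \<bar>b\<bar> * x)"
proof -
  have "(\<lambda>x. ph (gg x)) \<sim>[at_top] (\<lambda>x. - (1 / \<bar>b\<bar>) * ln (gg x))"
    by (rule asymp_equiv_compose'[OF claim1 gg_lim0])
  moreover have "eventually (\<lambda>x. ph (gg x) = x) at_top"
    using eventually_gt_at_top[of 0] by eventually_elim (use gg_props in auto)
  ultimately have "(\<lambda>x. x) \<sim>[at_top] (\<lambda>x. - (1 / \<bar>b\<bar>) * ln (gg x))"
    using asymp_equiv_cong[of "\<lambda>x. ph (gg x)" "\<lambda>x. x" at_top "\<lambda>x. - (1 / \<bar>b\<bar>) * ln (gg x)"] by auto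
  then have "(\<lambda>x. \<bar>b\<bar> * x) \<sim>[at_top] (\<lambda>x. \<bar>b\<bar> * (- (1 / \<bar>b\<bar>) * ln (gg x)))"
    by (intro asymp_equiv_mult asymp_equiv_refl)
  also have "(\<lambda>x. \<bar>b\<bar> * (- (1 / \<bar>b\<bar>) * ln (gg x))) = (\<lambda>x. - ln (gg x))"
    using b_nz by (simp add: field_simps)
  finally show ?thesis by (simp add: asymp_equiv_sym)
qed


lemma gg_cont: "continuous_on {0<..} gg"
proof -
  have "isCont gg x" if x: "x > 0" for x
  proof -
    define z0 where "z0 = gg x"
    have z0: "0 < z0" "z0 < l0" "ph z0 = x" using gg_props[OF x] by (auto simp: z0_def)
    define d where "d = min z0 (l0 - z0) / 2"
    have d: "d > 0" using z0 by (simp add: d_def)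
    have "isCont gg (ph z0)"
    proof (rule isCont_inverse_function[where f=ph and g=gg and x=z0, OF d])
      fix z assume "\<bar>z - z0\<bar> \<le> d"
      then have a1: "\<bar>z - z0\<bar> * 2 \<le> z0" and a2: "\<bar>z - z0\<bar> * 2 \<le> l0 - z0" by (auto simp: d_def)
      have a3: "z0 - z \<le> \<bar>z - z0\<bar>" and a4: "z - z0 \<le> \<bar>z - z0\<bar>" by auto
      have z1: "0 < z" using a1 z0(1) by (smt (verit))
      have z2: "z < l0" using a2 z0(2) by (smt (verit))
      have z: "0 < z \<and> z < l0" using z1 z2 by simp
      show "gg (ph z) = z" using gg_ph z by simp
      show "isCont ph z" using ph_deriv z by (metis DERIV_isCont)
    qed
    then show ?thesis using z0 by simp
  qed
  then show ?thesis by (simp add: continuous_on_eq_continuous_at)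
qed

lemma v_cont: "l \<ge> 0 \<Longrightarrow> continuous_on {0..} (\<lambda>t. v t l)"
  unfolding continuous_on_eq_continuous_within
  using v_ode DERIV_continuous by fastforce

lemma GL:
  assumes l: "l \<ge> 0" and J: "convex J" "J \<subseteq> {0..}" and s1: "s1 \<in> J"
    and mu: "0 < v s1 l" "v s1 l < l0"
    and hpos: "\<And>s. s \<in> J \<Longrightarrow> ph (v s1 l) + sgn b * (s - s1) > 0"
  shows "\<And>s. s \<in> J \<Longrightarrow> v s l = gg (ph (v s1 l) + sgn b * (s - s1))"
proof -
  define w where "w = (\<lambda>s. v s l)"
  define h where "h = (\<lambda>s. ph (v s1 l) + sgn b * (s - s1))"
  define K where "K = {s \<in> J. w s - gg (h s) = 0}"
  have wc: "continuous_on J w" unfolding w_def by (rule continuous_on_subset[OF v_cont[OF l] J(2)])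
  have hc: "continuous_on J (\<lambda>s. gg (h s))"
  proof (rule continuous_on_compose2[OF gg_cont])
    show "continuous_on J h" unfolding h_def by (intro continuous_intros)
    show "h ` J \<subseteq> {0<..}" using hpos by (auto simp: h_def)
  qed
  have clo: "closedin (top_of_set J) K"
    unfolding K_def by (rule continuous_closedin_preimage_constant) (intro continuous_intros wc hc)
  have opn: "openin (top_of_set J) K"
    unfolding openin_euclidean_subtopology_iff
  proof (intro conjI ballI)
    show "K \<subseteq> J" by (auto simp: K_def)
    fix s assume sK: "s \<in> K"
    then have sJ: "s \<in> J" and ws: "w s = gg (h s)" by (auto simp: K_def)
    have hs: "h s > 0" using hpos sJ by (simp add: h_def)
    have ws01: "0 < w s" "w s < l0" using gg_props[OF hs] ws by auto
    define e0 where "e0 = min (w s) (l0 - w s)"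
    have e0: "e0 > 0" using ws01 by (simp add: e0_def)
    obtain e where e: "e > 0" "\<And>s'. s' \<in> J \<Longrightarrow> dist s' s < e \<Longrightarrow> dist (w s') (w s) < e0"
      using wc sJ e0 unfolding continuous_on_iff by metis
    define C where "C = J \<inter> ball s e"
    have Cin: "0 < w r \<and> w r < l0" if "r \<in> C" for r
      using e(2)[of r] that ws01 by (auto simp: C_def e0_def dist_real_def dist_commute abs_less_iff)
    have Cconv: "convex C" unfolding C_def by (intro convex_Int J convex_ball)
    have der: "((\<lambda>r. ph (w r) - sgn b * r) has_field_derivative 0) (at r within C)" if r: "r \<in> C" for r
    proof -
      have r0: "r \<ge> 0" "r \<in> J" using r J(2) by (auto simp: C_def)
      have wr: "0 < w r" "w r < l0" using Cin[OF r] by auto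
      have dw: "(w has_field_derivative - P (w r)) (at r within C)"
        unfolding w_def by (rule has_field_derivative_subset[OF v_ode[OF l r0(1)]]) (use J in \<open>auto simp: C_def\<close>)
      have "((ph \<circ> w) has_field_derivative (- f (w r)) * (- P (w r))) (at r within C)"
        by (rule DERIV_chain[OF ph_deriv[OF wr] dw])
      moreover have "(- f (w r)) * (- P (w r)) = sgn b"
        using P_sgn[of "w r"] wr by (simp add: f_def)
      ultimately have "((\<lambda>r. ph (w r)) has_field_derivative sgn b) (at r within C)" by (simp add: o_def)
      moreover have "((\<lambda>r. sgn b * r) has_field_derivative sgn b * 1) (at r within C)"
        by (rule DERIV_cmult[OF DERIV_ident])
      ultimately have "((\<lambda>r. ph (w r) - sgn b * r) has_field_derivative sgn b - sgn b * 1) (at r within C)"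
        by (rule DERIV_diff)
      then show ?thesis by simp
    qed
    obtain c where c: "\<And>r. r \<in> C \<Longrightarrow> ph (w r) - sgn b * r = c"
      using has_field_derivative_zero_constant[OF Cconv der] by blast
    have sC: "s \<in> C" using sJ e by (simp add: C_def)
    have "ph (w s) = h s" using ws gg_props[OF hs] by simp
    then have cval: "c = h s - sgn b * s" using c[OF sC] by simp
    show "\<exists>e>0. \<forall>x'\<in>J. dist x' s < e \<longrightarrow> x' \<in> K"
    proof (intro exI[of _ e] conjI ballI impI e)
      fix r assume rJ: "r \<in> J" and rd: "dist r s < e"
      then have rC: "r \<in> C" by (simp add: C_def dist_commute)
      have "ph (w r) = h r" using c[OF rC] cval by (simp add: h_def algebra_simps)
      then have "gg (h r) = w r" using gg_ph Cin[OF rC] by metis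
      then show "r \<in> K" using rJ by (simp add: K_def)
    qed
  qed
  have "s1 \<in> K" using s1 gg_ph[OF mu] by (simp add: K_def h_def w_def)
  then have "K = J" using connected_clopen[THEN iffD1, OF convex_connected[OF J(1)], rule_format, of K] clo opn
    by blast
  then show "\<And>s. s \<in> J \<Longrightarrow> v s l = gg (ph (v s1 l) + sgn b * (s - s1))"
    by (auto simp: K_def w_def h_def)
qed


lemma sol_fwd: "b > 0 \<Longrightarrow> 0 < l \<Longrightarrow> l < l0 \<Longrightarrow> t \<ge> 0 \<Longrightarrow> v t l = gg (ph l + t)"
proof -
  assume a: "b > 0" "0 < l" "l < l0" "t \<ge> 0"
  have v0: "v 0 l = l" using v_init a by simp
  have "v t l = gg (ph (v 0 l) + sgn b * (t - 0))"
  proof (rule GL[where J="{0..}"])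
    show "\<And>s. s \<in> {0..} \<Longrightarrow> ph (v 0 l) + sgn b * (s - 0) > 0"
      using a v0 ph_pos[of l] by auto
  qed (use a v0 in auto)
  then show ?thesis using a v0 by simp
qed

lemma sol_neg: "b < 0 \<Longrightarrow> 0 < l \<Longrightarrow> l < l0 \<Longrightarrow> 0 \<le> t \<Longrightarrow> t < ph l \<Longrightarrow> v t l = gg (ph l - t)"
proof -
  assume a: "b < 0" "0 < l" "l < l0" "0 \<le> t" "t < ph l"
  have v0: "v 0 l = l" using v_init a by simp
  have "v t l = gg (ph (v 0 l) + sgn b * (t - 0))"
  proof (rule GL[where J="{0..t}"])
    show "\<And>s. s \<in> {0..t} \<Longrightarrow> ph (v 0 l) + sgn b * (s - 0) > 0"
      using a v0 by auto
  qed (use a v0 in auto)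
  then show ?thesis using a v0 by simp
qed

lemma rho_exists: "b < 0 \<Longrightarrow> t > 0 \<Longrightarrow> v t (gg t) = l0"
proof -
  assume a: "b < 0" "t > 0"
  define l where "l = gg t"
  have l: "0 < l" "l < l0" "ph l = t" using gg_props[OF a(2)] by (auto simp: l_def)
  have eq: "v s l = gg (t - s)" if "0 \<le> s" "s < t" for s
    using sol_neg[of l s] a l that by simp
  have F: "at t within {0..<t} = at_left t"
    by (rule at_within_nhd[where S="{0<..}"]) (use a in auto)
  have "((\<lambda>s. v s l) \<longlongrightarrow> v t l) (at t within {0..})"
    using v_cont[of l] l a unfolding continuous_on_def by auto
  then have "((\<lambda>s. v s l) \<longlongrightarrow> v t l) (at t within {0..<t})"
    by (rule tendsto_within_subset) auto
  then have lim1: "((\<lambda>s. v s l) \<longlongrightarrow> v t l) (at_left t)" using F by simp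
  have ev: "eventually (\<lambda>s. v s l = gg (t - s)) (at_left t)"
    unfolding eventually_at_left_field using a eq by (intro exI[of _ 0]) auto
  have lim1': "((\<lambda>s. gg (t - s)) \<longlongrightarrow> v t l) (at_left t)"
    by (rule Lim_transform_eventually[OF lim1 ev])
  have "((\<lambda>s. t - s) \<longlongrightarrow> t - t) (at_left t)"
    by (intro tendsto_intros)
  then have "((\<lambda>s. t - s) \<longlongrightarrow> 0) (at_left t)" by simp
  moreover have "eventually (\<lambda>s. t - s > 0) (at_left t)"
    unfolding eventually_at_left_field by (intro exI[of _ "t - 1"]) auto
  ultimately have "filterlim (\<lambda>s. t - s) (at_right 0) (at_left t)"
    by (rule tendsto_imp_filterlim_at_right)
  from filterlim_compose[OF gg_lim_l0 this]
  have lim2: "((\<lambda>s. gg (t - s)) \<longlongrightarrow> l0) (at_left t)" .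
  have "v t l = l0" by (rule tendsto_unique[OF _ lim1' lim2]) simp
  then show ?thesis by (simp add: l_def)
qed

lemma near_left: "b < 0 \<Longrightarrow> t > 0 \<Longrightarrow> l \<ge> 0 \<Longrightarrow> v t l = l0 \<Longrightarrow> e > 0 \<Longrightarrow>
    \<exists>s'. 0 < s' \<and> s' < t \<and> t - s' < e \<and> 0 < v s' l \<and> v s' l < l0"
proof -
  assume a: "b < 0" "t > 0" "l \<ge> 0" "v t l = l0" "e > 0"
  have "at t within {0..} = at t" by (rule at_within_interior) (use a in auto)
  then have D: "((\<lambda>s. v s l) has_real_derivative - P l0) (at t)"
    using v_ode[of l t] a by simp
  have Pn: "- P l0 > 0" using P_neg[OF a(1) lambda0_pos] by simp
  obtain d1 where d1: "d1 > 0" "\<And>h. h > 0 \<Longrightarrow> h < d1 \<Longrightarrow> v (t - h) l < v t l"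
    using DERIV_pos_inc_left[OF D Pn] by blast
  have "isCont (\<lambda>s. v s l) t" using D by (rule DERIV_isCont)
  then obtain d2 where d2: "d2 > 0" "\<And>s. dist s t < d2 \<Longrightarrow> dist (v s l) (v t l) < l0"
    using lambda0_pos unfolding continuous_at_eps_delta by blast
  define h where "h = min (min d1 d2) (min t e) / 2"
  have h: "h > 0" "h < d1" "h < d2" "h < t" "h < e" using d1 d2 a by (auto simp: h_def)
  have "v (t - h) l < l0" using d1(2)[OF h(1,2)] a by simp
  moreover have "dist (v (t - h) l) l0 < l0" using d2(2)[of "t - h"] h a by (simp add: dist_real_def)
  then have "v (t - h) l > 0" by (simp add: dist_real_def abs_less_iff)
  ultimately show ?thesis using h by (intro exI[of _ "t - h"] conjI) simp_all
qed

lemma rho_unique: "b < 0 \<Longrightarrow> t > 0 \<Longrightarrow> l \<ge> 0 \<Longrightarrow> v t l = l0 \<Longrightarrow> l = gg t"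
proof -
  assume a: "b < 0" "t > 0" "l \<ge> 0" "v t l = l0"
  have v0: "v 0 l = l" using v_init a by simp
  obtain s0 where s0: "0 < s0" "s0 < t" "0 < v s0 l" "v s0 l < l0"
    using near_left[OF a, of 1] by auto
  have bk: "0 < l \<and> l < l0 \<and> ph l = ph (v s l) + s"
    if hs: "0 < s" "s < t" "0 < v s l" "v s l < l0" for s :: real
  proof -
    note s = hs
    have "v 0 l = gg (ph (v s l) + sgn b * (0 - s))"
    proof (rule GL[where J="{0..s}"])
      show "\<And>r. r \<in> {0..s} \<Longrightarrow> ph (v s l) + sgn b * (r - s) > 0"
        using a s ph_pos[of "v s l"] by auto
    qed (use a s in auto)
    then have ls: "l = gg (ph (v s l) + s)" using v0 a by simp
    have pp: "ph (v s l) + s > 0" using ph_pos[of "v s l"] s by auto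
    from gg_props[OF pp] ls have "0 < l" "l < l0" "ph l = ph (v s l) + s" by auto
    then show ?thesis using ls by simp
  qed
  have l: "0 < l" "l < l0" using bk[OF s0] by auto
  have ge: "ph l \<ge> t"
  proof (rule ccontr)
    assume "\<not> ph l \<ge> t"
    then have e: "t - ph l > 0" by simp
    obtain s' where s': "0 < s'" "s' < t" "t - s' < t - ph l" "0 < v s' l" "v s' l < l0"
      using near_left[OF a e] by blast
    have "ph l = ph (v s' l) + s'" using bk[OF s'(1,2,4,5)] by simp
    moreover have "ph (v s' l) > 0" using ph_pos s' by simp
    ultimately show False using s' by linarith
  qed
  have eq: "ph l = t"
  proof (rule ccontr)
    assume "ph l \<noteq> t"
    then have lt: "t < ph l" using ge by simp
    have "v t l = gg (ph l - t)" by (rule sol_neg) (use a l lt in auto)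
    moreover have "gg (ph l - t) < l0" using gg_props[of "ph l - t"] lt by simp
    ultimately show False using a by simp
  qed
  show ?thesis using gg_ph[OF l] eq by simp
qed

lemma rho_eq: "b < 0 \<Longrightarrow> t > 0 \<Longrightarrow> rho_t b v l0 t = gg t"
proof -
  assume a: "b < 0" "t > 0"
  have g: "0 < gg t" using gg_props[OF a(2)] by simp
  have "vinv v t l0 = gg t" unfolding vinv_def
  proof (rule the_equality)
    show "0 \<le> gg t \<and> v t (gg t) = l0" using g rho_exists[OF a] by simp
    show "\<And>l. 0 \<le> l \<and> v t l = l0 \<Longrightarrow> l = gg t" using rho_unique[OF a] by blast
  qed
  then show ?thesis using a by (simp add: rho_t_def)
qed

lemma ev_lt: "filterlim (lt :: real \<Rightarrow> real) (at_right 0) at_top \<Longrightarrow> (c::real) > 0 \<Longrightarrow> eventually (\<lambda>t. 0 < lt t \<and> lt t < c) at_top"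
proof -
  assume lt: "filterlim lt (at_right 0) at_top" and c: "c > (0::real)"
  have "eventually (\<lambda>x. 0 < x \<and> x < c) (at_right (0::real))"
    unfolding eventually_at_right_field using c by blast
  then show ?thesis using lt unfolding filterlim_iff by blast
qed

lemma claim3: "b > 0 \<Longrightarrow> filterlim lt (at_right 0) at_top \<Longrightarrow>
   (\<lambda>t. ln (v t (lt t))) \<sim>[at_top] (\<lambda>t. - b * (t + ph (lt t)))"
proof -
  assume b: "b > 0" and lt: "filterlim lt (at_right 0) at_top"
  define H where "H t = t + ph (lt t)" for t
  have ev: "eventually (\<lambda>t. t \<ge> 0 \<and> 0 < lt t \<and> lt t < l0) at_top"
    using ev_lt[OF lt lambda0_pos] eventually_ge_at_top[of 0] by eventually_elim auto
  have "eventually (\<lambda>t. t \<le> H t) at_top"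
    using ev by eventually_elim (use ph_nonneg in \<open>auto simp: H_def\<close>)
  then have HH: "filterlim H at_top at_top" by (rule filterlim_at_top_mono[OF filterlim_ident])
  have "(\<lambda>t. - ln (gg (H t))) \<sim>[at_top] (\<lambda>t. \<bar>b\<bar> * H t)"
    by (rule asymp_equiv_compose'[OF claim2 HH])
  then have "(\<lambda>t. - (- ln (gg (H t)))) \<sim>[at_top] (\<lambda>t. - (\<bar>b\<bar> * H t))"
    by (rule asymp_equiv_uminus)
  then have A: "(\<lambda>t. ln (gg (H t))) \<sim>[at_top] (\<lambda>t. - b * (t + ph (lt t)))"
    using b by (simp add: H_def)
  have "eventually (\<lambda>t. ln (gg (H t)) = ln (v t (lt t))) at_top"
    using ev by eventually_elim (use sol_fwd b in \<open>auto simp: H_def add.commute\<close>)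
  then show ?thesis using A asymp_equiv_cong[of "\<lambda>t. ln (gg (H t))" "\<lambda>t. ln (v t (lt t))" at_top
      "\<lambda>t. - b * (t + ph (lt t))" "\<lambda>t. - b * (t + ph (lt t))"] by simp
qed

lemma claim4: "b < 0 \<Longrightarrow> filterlim lt (at_right 0) at_top \<Longrightarrow>
   (\<lambda>t. ln (v t (rho_t b v l0 t * lt t))) \<sim>[at_top] (\<lambda>t. ln (lt t))"
proof -
  assume b: "b < 0" and lt: "filterlim lt (at_right 0) at_top"
  define X where "X t = ph (gg t * lt t) - t" for t
  define G where "G t = (1 / \<bar>b\<bar>) * (- ln (lt t))" for t
  have ev: "eventually (\<lambda>t. t > 0 \<and> 0 < lt t \<and> lt t < 1) at_top"
    using ev_lt[OF lt zero_less_one] eventually_gt_at_top[of 0] by eventually_elim auto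
  have stepa: "eventually (\<lambda>t. v t (rho_t b v l0 t * lt t) = gg (X t)) at_top"
    using ev
  proof eventually_elim
    case (elim t)
    have g: "0 < gg t" "gg t < l0" "ph (gg t) = t" using gg_props elim by auto
    define m where "m = gg t * lt t"
    have m: "0 < m" "m < gg t" using g elim by (auto simp: m_def)
    have "ph (gg t) < ph m" by (rule ph_strict) (use m g in auto)
    then have "v t m = gg (ph m - t)" using sol_neg[of m t] b m g elim by auto
    then show ?case using rho_eq[OF b] elim by (simp add: X_def m_def)
  qed
  have stepb: "X \<sim>[at_top] G"
  proof -
    have "(\<lambda>t. X t - G t) \<in> o[at_top](G)"
    proof (rule landau_o.smallI)
      fix c :: real assume c: "c > 0"
      define \<epsilon> where "\<epsilon> = c / \<bar>b\<bar>"
      have e: "\<epsilon> > 0" unfolding \<epsilon>_def by (intro divide_pos_pos c) (use b in simp)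
      obtain \<delta> where \<delta>: "\<delta> > 0" "\<delta> \<le> l0" and Kd: "\<And>x y. 0 < x \<Longrightarrow> x \<le> y \<Longrightarrow> y \<le> \<delta> \<Longrightarrow>
          \<bar>ph x - ph y - (ln y - ln x) / \<bar>b\<bar>\<bar> \<le> \<epsilon> * (ln y - ln x)"
        using K[OF e] by blast
      have "eventually (\<lambda>x. 0 < x \<and> x < \<delta>) (at_right (0::real))"
        unfolding eventually_at_right_field using \<delta> by blast
      then have evg: "eventually (\<lambda>t. 0 < gg t \<and> gg t < \<delta>) at_top"
        using gg_lim0 unfolding filterlim_iff by blast
      show "eventually (\<lambda>t. norm (X t - G t) \<le> c * norm (G t)) at_top"
        using ev evg
      proof eventually_elim
        case (elim t)
        have g: "ph (gg t) = t" using gg_props elim by auto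
        have lnm: "ln (gg t * lt t) = ln (gg t) + ln (lt t)" by (rule ln_mult_pos) (use elim in auto)
        have "gg t * lt t \<le> gg t" using elim by (simp add: mult_le_cancel_left1)
        then have k: "\<bar>ph (gg t * lt t) - ph (gg t) - (ln (gg t) - ln (gg t * lt t)) / \<bar>b\<bar>\<bar>
             \<le> \<epsilon> * (ln (gg t) - ln (gg t * lt t))"
          using Kd[of "gg t * lt t" "gg t"] elim by auto
        have nl: "- ln (lt t) > 0" using elim by simp
        have "X t - G t = ph (gg t * lt t) - ph (gg t) - (ln (gg t) - ln (gg t * lt t)) / \<bar>b\<bar>"
          using g lnm by (simp add: X_def G_def)
        then have "norm (X t - G t) \<le> \<epsilon> * (- ln (lt t))" using k lnm by simp
        also have "\<dots> = c * norm (G t)" using nl b by (simp add: \<epsilon>_def G_def abs_mult)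
        finally show ?case .
      qed
    qed
    then show ?thesis by (simp add: asymp_equiv_altdef)
  qed
  have "filterlim (\<lambda>t. ln (lt t)) at_bot at_top" by (rule filterlim_compose[OF ln_at_0 lt])
  then have "filterlim (\<lambda>t. - ln (lt t)) at_top at_top" by (simp add: filterlim_uminus_at_bot)
  moreover have "0 < 1 / \<bar>b\<bar>" using b by simp
  ultimately have GG: "filterlim G at_top at_top" unfolding G_def
    using filterlim_tendsto_pos_mult_at_top[OF tendsto_const[of "1 / \<bar>b\<bar>"]] by blast
  have XX: "filterlim X at_top at_top"
    by (rule asymp_equiv_at_top_transfer[OF _ GG]) (use stepb in \<open>simp add: asymp_equiv_sym\<close>)
  have "(\<lambda>t. - ln (gg (X t))) \<sim>[at_top] (\<lambda>t. \<bar>b\<bar> * X t)"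
    by (rule asymp_equiv_compose'[OF claim2 XX])
  also have "(\<lambda>t. \<bar>b\<bar> * X t) \<sim>[at_top] (\<lambda>t. \<bar>b\<bar> * G t)"
    by (intro asymp_equiv_mult asymp_equiv_refl stepb)
  also have "(\<lambda>t. \<bar>b\<bar> * G t) = (\<lambda>t. - ln (lt t))" using b by (simp add: G_def)
  finally have "(\<lambda>t. - (- ln (gg (X t)))) \<sim>[at_top] (\<lambda>t. - (- ln (lt t)))"
    by (rule asymp_equiv_uminus)
  then have A: "(\<lambda>t. ln (gg (X t))) \<sim>[at_top] (\<lambda>t. ln (lt t))" by simp
  have "eventually (\<lambda>t. ln (gg (X t)) = ln (v t (rho_t b v l0 t * lt t))) at_top"
    using stepa by eventually_elim simp
  then show ?thesis using A asymp_equiv_cong[of "\<lambda>t. ln (gg (X t))" "\<lambda>t. ln (v t (rho_t b v l0 t * lt t))" at_top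
      "\<lambda>t. ln (lt t)" "\<lambda>t. ln (lt t)"] by simp
qed

end

theorem lemma2:
  fixes \<sigma> b l0 :: real and \<pi> :: "real measure" and v :: "real \<Rightarrow> real \<Rightarrow> real"
  assumes sigma_nonneg: "\<sigma> \<ge> 0"
    and pi_sets: "sets \<pi> = sets borel"
    and pi_support: "emeasure \<pi> {..0} = 0"
    and pi_sigma_finite: "sigma_finite_measure \<pi>"
    and pi_moment: "(\<integral>\<^sup>+ z\<in>{0<..}. ennreal (min z (z^2)) \<partial>\<pi>) < \<infinity>"
    and v_init: "\<And>l. l \<ge> 0 \<Longrightarrow> v 0 l = l"
    and v_ode: "\<And>l t. l \<ge> 0 \<Longrightarrow> t \<ge> 0 \<Longrightarrow>
                 ((\<lambda>s. v s l) has_real_derivative (- Psi b \<sigma> \<pi> (v t l))) (at t within {0..})"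
    and b_nz: "b \<noteq> 0"
    and lambda0_pos: "0 < l0"
    and lambda0_rho: "b < 0 \<Longrightarrow> ereal l0 < rho_Psi b \<sigma> \<pi>"
  shows "phi b \<sigma> \<pi> l0 \<sim>[at_right 0] (\<lambda>l. - (1 / \<bar>b\<bar>) * ln l)
         \<and> (\<lambda>x. - ln (ginv b \<sigma> \<pi> l0 x)) \<sim>[at_top] (\<lambda>x. \<bar>b\<bar> * x)
         \<and> (\<forall>lt :: real \<Rightarrow> real. filterlim lt (at_right 0) at_top \<longrightarrow>
               (b > 0 \<longrightarrow> (\<lambda>t. ln (v t (lt t))) \<sim>[at_top] (\<lambda>t. - b * (t + phi b \<sigma> \<pi> l0 (lt t))))
             \<and> (b < 0 \<longrightarrow> (\<lambda>t. ln (v t (rho_t b v l0 t * lt t))) \<sim>[at_top] (\<lambda>t. ln (lt t))))"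
proof -
  interpret S: setting \<sigma> b l0 \<pi> v
    by (unfold_locales; fact)
  show ?thesis
    using S.claim1 S.claim2 S.claim3 S.claim4 by blast
qed

end
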